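(* Let $\Theta$ be a finite set, $b$ a belief function on $\Theta$ with mass function $m_b$, and $\emptyset \subsetneq A \subseteq \Theta$. There is a unique $L_2$ conditional belief function $b_{L_2,\mathcal{M}}(\cdot|A)$ of $b$ with respect to $A$ in the mass space (minimizer of $\|\vec{m}_b - \vec{m}_a\|_{L_2}$ over $\vec{m}_a\in\mathcal{M}_A$), and its mass function is, for all $\emptyset \subsetneq B \subseteq A$, \[ m_{L_2,\mathcal{M}}(B|A) = m_b(B) + \frac{1}{2^{|A|}-1} \sum_{C \not\subseteq A} m_b(C) = m_b(B) + \frac{pl_b(A^c)}{2^{|A|}-1}, \] (and it assigns zero mass to subsets not contained in $A$), where the sum runs over nonempty $C\subseteq\Theta$ not contained in $A$.
   Context: A mass function on a finite set $\Theta$ is $m:2^\Theta\to[0,1]$ with $m(\emptyset)=0$ and $\sum_{A\subseteq\Theta} m(A)=1$; the associated belief function is $b(A)=\sum_{B\subseteq A} m_b(B)$ and plausibility $pl_b(A)=1-b(A^c)$. The mass vector of $b$ is $\vec{m}_b=[m_b(B)]_{\emptyset\subsetneq B\subseteq\Theta}\in\mathbb{R}^{2^{|\Theta|}-1}$. For $\emptyset\subsetneq A\subseteq\Theta$, $\mathcal{M}_A$ is the set of mass vectors of belief functions all of whose focal elements (subsets of nonzero mass) are subsets of $A$. The $L_2$ distance is $\|\vec{m}_b-\vec{m}_{b'}\|_{L_2}=\sqrt{\sum_{\emptyset\subsetneq B\subseteq\Theta}(m_b(B)-m_{b'}(B))^2}$. *)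

theory Defs
  imports Complex_Main
begin

definition is_mass :: "'a set \<Rightarrow> ('a set \<Rightarrow> real) \<Rightarrow> bool" where
  "is_mass Theta m \<longleftrightarrow>
     m {} = 0 \<and> (\<forall>B. 0 \<le> m B) \<and> (\<forall>B. \<not> B \<subseteq> Theta \<longrightarrow> m B = 0)
     \<and> (\<Sum>B\<in>Pow Theta. m B) = 1"

definition bel :: "('a set \<Rightarrow> real) \<Rightarrow> 'a set \<Rightarrow> real" where
  "bel m A = (\<Sum>B\<in>Pow A. m B)"

definition pl :: "'a set \<Rightarrow> ('a set \<Rightarrow> real) \<Rightarrow> 'a set \<Rightarrow> real" where
  "pl Theta m A = 1 - bel m (Theta - A)"

definition mass_space_M :: "'a set \<Rightarrow> 'a set \<Rightarrow> ('a set \<Rightarrow> real) set" where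
  "mass_space_M Theta A = {m. is_mass Theta m \<and> (\<forall>B. m B \<noteq> 0 \<longrightarrow> B \<subseteq> A)}"

definition L2_mass_dist :: "'a set \<Rightarrow> ('a set \<Rightarrow> real) \<Rightarrow> ('a set \<Rightarrow> real) \<Rightarrow> real" where
  "L2_mass_dist Theta m m' = sqrt (\<Sum>B\<in>{B. B \<subseteq> Theta \<and> B \<noteq> {}}. (m B - m' B)^2)"

definition is_L2_conditional ::
  "'a set \<Rightarrow> ('a set \<Rightarrow> real) \<Rightarrow> 'a set \<Rightarrow> ('a set \<Rightarrow> real) \<Rightarrow> bool" where
  "is_L2_conditional Theta m A ma \<longleftrightarrow>
     ma \<in> mass_space_M Theta A \<and>
     (\<forall>m'\<in>mass_space_M Theta A. L2_mass_dist Theta m ma \<le> L2_mass_dist Theta m m')"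

end

theory Submission
  imports Defs
begin

theorem theorem3:
  fixes Theta A :: "'a set" and m :: "'a set \<Rightarrow> real"
  assumes "finite Theta" and "is_mass Theta m"
    and "A \<noteq> {}" and "A \<subseteq> Theta"
  shows "(\<exists>!ma. is_L2_conditional Theta m A ma) \<and>
         (\<forall>ma. is_L2_conditional Theta m A ma \<longrightarrow>
            (\<forall>B. B \<noteq> {} \<and> B \<subseteq> A \<longrightarrow>
               ma B = m B + (\<Sum>C\<in>{C. C \<subseteq> Theta \<and> C \<noteq> {} \<and> \<not> C \<subseteq> A}. m C)
                              / (2 ^ card A - 1)
             \<and> ma B = m B + pl Theta m (Theta - A) / (2 ^ card A - 1))
            \<and> (\<forall>B. \<not> B \<subseteq> A \<longrightarrow> ma B = 0))"
proof -
  note fin = assms(1) and mm = assms(2)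
  define P where "P = {B. B \<subseteq> Theta \<and> B \<noteq> {}}"
  define Q where "Q = Pow A - {{}}"
  define R where "R = {C. C \<subseteq> Theta \<and> C \<noteq> {} \<and> \<not> C \<subseteq> A}"
  define k where "k = (\<Sum>C\<in>R. m C)"
  define N :: real where "N = 2 ^ card A - 1"
  define ms where "ms = (\<lambda>B. if B \<noteq> {} \<and> B \<subseteq> A then m B + k / N else 0)"
  have finA: "finite A" using fin assms(4) finite_subset by blast
  have finP: "finite P" unfolding P_def using fin by (simp add: finite_subset[of _ "Pow Theta"])
  have finQ: "finite Q" unfolding Q_def using finA by simp
  have QP: "Q \<subseteq> P" unfolding Q_def P_def using assms(4) by auto
  have RPQ: "R = P - Q" unfolding R_def P_def Q_def by auto
  have cardQ: "real (card Q) = N"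
  proof -
    have "card Q = 2 ^ card A - 1" unfolding Q_def using finA
      by (simp add: card_Pow card_Diff_singleton)
    moreover have "(1::nat) \<le> 2 ^ card A" by simp
    ultimately show ?thesis unfolding N_def by (simp add: of_nat_diff)
  qed
  have Npos: "N > 0"
  proof -
    have "card A \<ge> 1" using finA assms(3) by (simp add: Suc_le_eq card_gt_0_iff)
    then have "(2::real) ^ card A \<ge> 2 ^ 1" by (intro power_increasing) auto
    then show ?thesis unfolding N_def by simp
  qed
  have PowT: "Pow Theta = insert {} P" unfolding P_def by auto
  have m0: "m {} = 0" and mnn: "\<And>B. 0 \<le> m B" and m1: "(\<Sum>B\<in>Pow Theta. m B) = 1"
    using mm unfolding is_mass_def by auto
  have sumP: "\<And>f. f {} = 0 \<Longrightarrow> (\<Sum>B\<in>Pow Theta. f B) = (\<Sum>B\<in>P. f B)"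
    using finP unfolding PowT by (subst sum.insert) (auto simp: P_def)
  have splitP: "\<And>f. (\<Sum>B\<in>P. f B) = (\<Sum>B\<in>Q. f B) + (\<Sum>B\<in>P - Q. f B)"
    using finP QP by (metis add.commute sum.subset_diff)
  have mQk: "(\<Sum>B\<in>Q. m B) + k = 1"
    using m1 sumP[of m] m0 splitP[of m] unfolding k_def RPQ by simp
  have kpl: "k = pl Theta m (Theta - A)"
  proof -
    have "Theta - (Theta - A) = A" using assms(4) by auto
    moreover have "(\<Sum>B\<in>Pow A. m B) = (\<Sum>B\<in>Q. m B)"
      unfolding Q_def using finA m0 by (simp add: sum_diff1)
    ultimately show ?thesis unfolding pl_def bel_def using mQk by simp
  qed
  have knn: "k \<ge> 0" unfolding k_def by (intro sum_nonneg) (use mnn in auto)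
  have MA_zero: "\<And>m' B. m' \<in> mass_space_M Theta A \<Longrightarrow> B \<notin> Q \<Longrightarrow> m' B = 0"
    unfolding mass_space_M_def is_mass_def Q_def by auto
  have MA_sum: "\<And>m'. m' \<in> mass_space_M Theta A \<Longrightarrow> (\<Sum>B\<in>Q. m' B) = 1"
  proof -
    fix m' assume h: "m' \<in> mass_space_M Theta A"
    have "(\<Sum>B\<in>Pow Theta. m' B) = 1" "m' {} = 0" using h unfolding mass_space_M_def is_mass_def by auto
    then have "(\<Sum>B\<in>P. m' B) = 1" using sumP[of m'] by simp
    moreover have "(\<Sum>B\<in>P - Q. m' B) = 0" using MA_zero[OF h] by simp
    ultimately show "(\<Sum>B\<in>Q. m' B) = 1" using splitP[of m'] by simp
  qed
  have msQ: "\<And>B. B \<in> Q \<Longrightarrow> ms B = m B + k / N" unfolding ms_def Q_def by auto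
  have msnQ: "\<And>B. B \<notin> Q \<Longrightarrow> ms B = 0" unfolding ms_def Q_def by auto
  have sum_ms: "(\<Sum>B\<in>Q. ms B) = 1"
  proof -
    have "(\<Sum>B\<in>Q. ms B) = (\<Sum>B\<in>Q. m B + k / N)" using msQ by simp
    also have "\<dots> = (\<Sum>B\<in>Q. m B) + real (card Q) * (k / N)" by (simp add: sum.distrib)
    also have "\<dots> = 1" using cardQ Npos mQk by simp
    finally show ?thesis .
  qed
  have msM: "ms \<in> mass_space_M Theta A"
  proof -
    have "\<forall>B. 0 \<le> ms B" unfolding ms_def using mnn knn Npos by auto
    moreover have "(\<Sum>B\<in>Pow Theta. ms B) = 1"
    proof -
      have "(\<Sum>B\<in>Pow Theta. ms B) = (\<Sum>B\<in>P. ms B)" by (rule sumP) (simp add: ms_def)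
      also have "\<dots> = (\<Sum>B\<in>Q. ms B)" using splitP[of ms] msnQ by simp
      finally show ?thesis using sum_ms by simp
    qed
    ultimately show ?thesis unfolding mass_space_M_def is_mass_def ms_def using assms(4) by auto
  qed
  define D where "D = (\<lambda>m'. (\<Sum>B\<in>P. (m B - m' B)^2))"
  have Ldist: "\<And>m'. L2_mass_dist Theta m m' = sqrt (D m')"
    unfolding L2_mass_dist_def D_def P_def by simp
  have key: "\<And>m'. m' \<in> mass_space_M Theta A \<Longrightarrow> D m' = D ms + (\<Sum>B\<in>Q. (m' B - ms B)^2)"
  proof -
    fix m' assume h: "m' \<in> mass_space_M Theta A"
    have "D m' = (\<Sum>B\<in>Q. (m B - m' B)^2) + (\<Sum>B\<in>P - Q. (m B - m' B)^2)"
      unfolding D_def by (rule splitP)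
    also have "(\<Sum>B\<in>P - Q. (m B - m' B)^2) = (\<Sum>B\<in>P - Q. (m B - ms B)^2)"
      using MA_zero[OF h] msnQ by simp
    also have "(\<Sum>B\<in>Q. (m B - m' B)^2) = (\<Sum>B\<in>Q. (m B - ms B)^2 + (m' B - ms B)^2 + 2 * (k / N) * (m' B - ms B))"
      using Npos by (intro sum.cong) (auto simp: msQ power2_eq_square field_simps)
    also have "\<dots> = (\<Sum>B\<in>Q. (m B - ms B)^2) + (\<Sum>B\<in>Q. (m' B - ms B)^2) + 2 * (k / N) * ((\<Sum>B\<in>Q. m' B) - (\<Sum>B\<in>Q. ms B))"
      by (simp add: sum.distrib sum_distrib_left sum_subtractf sum_divide_distrib[symmetric] right_diff_distrib)
    also have "\<dots> = (\<Sum>B\<in>Q. (m B - ms B)^2) + (\<Sum>B\<in>Q. (m' B - ms B)^2)"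
      using MA_sum[OF h] sum_ms by simp
    finally show "D m' = D ms + (\<Sum>B\<in>Q. (m' B - ms B)^2)"
      unfolding D_def using splitP[of "\<lambda>B. (m B - ms B)^2"] by simp
  qed
  have msC: "is_L2_conditional Theta m A ms"
    unfolding is_L2_conditional_def Ldist
  proof (intro conjI ballI msM)
    fix m' assume "m' \<in> mass_space_M Theta A"
    from key[OF this] have "D ms \<le> D m'" by (simp add: sum_nonneg)
    then show "sqrt (D ms) \<le> sqrt (D m')" by simp
  qed
  have uniq: "\<And>ma. is_L2_conditional Theta m A ma \<Longrightarrow> ma = ms"
  proof -
    fix ma assume h: "is_L2_conditional Theta m A ma"
    then have maM: "ma \<in> mass_space_M Theta A" unfolding is_L2_conditional_def by simp
    have "sqrt (D ma) \<le> sqrt (D ms)" using h msM unfolding is_L2_conditional_def Ldist by blast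
    then have "D ma \<le> D ms" by simp
    then have "(\<Sum>B\<in>Q. (ma B - ms B)^2) \<le> 0" using key[OF maM] by simp
    then have "(\<Sum>B\<in>Q. (ma B - ms B)^2) = 0" by (simp add: order_antisym sum_nonneg)
    then have "\<forall>B\<in>Q. (ma B - ms B)^2 = 0" using finQ by (subst (asm) sum_nonneg_eq_0_iff) auto
    then have "\<forall>B\<in>Q. ma B = ms B" by simp
    moreover have "\<forall>B. B \<notin> Q \<longrightarrow> ma B = ms B" using MA_zero[OF maM] msnQ by simp
    ultimately show "ma = ms" by blast
  qed
  show ?thesis
  proof (intro conjI allI impI)
    show "\<exists>!ma. is_L2_conditional Theta m A ma" using msC uniq by blast
  next
    fix ma B assume h: "is_L2_conditional Theta m A ma" and "B \<noteq> {} \<and> B \<subseteq> A"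
    then have "ma B = m B + k / N" using uniq[OF h] msQ unfolding Q_def by auto
    then show "ma B = m B + (\<Sum>C\<in>{C. C \<subseteq> Theta \<and> C \<noteq> {} \<and> \<not> C \<subseteq> A}. m C) / (2 ^ card A - 1)"
      and "ma B = m B + pl Theta m (Theta - A) / (2 ^ card A - 1)"
      using kpl unfolding k_def R_def N_def by simp_all
  next
    fix ma B assume h: "is_L2_conditional Theta m A ma" and "\<not> B \<subseteq> A"
    then show "ma B = 0" using uniq[OF h] msnQ unfolding Q_def by auto
  qed
qed

end
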